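(* In the setting of the interior permanent magnet synchronous machine model (state $x=(i_{s\alpha},i_{s\beta},\omega,\theta)^T$, $\frac{d}{dt}\big(L(\theta)i_{s\alpha\beta}+\psi_r(\cos\theta,\sin\theta)^T\big)=v-R_si_{s\alpha\beta}$, $\dot\omega=0$, $\dot\theta=\omega$, which includes the surface PMSM $L_\Delta=0$ and the synchronous reluctance machine $\psi_r=0$), define the observability vector $\Psi_{\mathcal{O}}=(\Psi_{\mathcal{O}d},\Psi_{\mathcal{O}q})$ in rotor coordinates by $$\Psi_{\mathcal{O}d}=L_\Delta i_{sd}+\psi_r,\qquad \Psi_{\mathcal{O}q}=L_\Delta i_{sq},$$ and, when $\Psi_{\mathcal{O}}\neq0$, let $\theta_{\mathcal{O}}$ be its polar angle, so $\frac{d\theta_{\mathcal{O}}}{dt}=\frac{\Psi_{\mathcal{O}d}\dot\Psi_{\mathcal{O}q}-\Psi_{\mathcal{O}q}\dot\Psi_{\mathcal{O}d}}{\Psi_{\mathcal{O}d}^2+\Psi_{\mathcal{O}q}^2}$ (derivatives along the model). Then the $4\times4$ observability matrix $\mathcal{O}(x)$ (rows: gradients in $x$ of $i_{s\alpha},i_{s\beta},\mathcal{L}_fi_{s\alpha},\mathcal{L}_fi_{s\beta}$) satisfies $$\det\mathcal{O}(x)=\frac{\Psi_{\mathcal{O}d}^2+\Psi_{\mathcal{O}q}^2}{L_dL_q}\Big(\omega-\frac{d\theta_{\mathcal{O}}}{dt}\Big)\quad\text{when }\Psi_{\mathcal{O}}\ne0,\qquad \det\mathcal{O}(x)=0\quad\text{when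 }\Psi_{\mathcal{O}}=0.$$ Consequently, the observability rank condition holds at $x$ (and hence the machine is locally weakly observable there) if and only if $\Psi_{\mathcal{O}}\neq0$ and $\frac{d\theta_{\mathcal{O}}}{dt}\neq\omega$.
   Context: $L(\theta)=\begin{bmatrix}L_0+L_2\cos2\theta & L_2\sin2\theta\\ L_2\sin2\theta & L_0-L_2\cos2\theta\end{bmatrix}$, $L_d=L_0+L_2>0$, $L_q=L_0-L_2>0$, $L_\Delta=L_d-L_q$; $i_{sd},i_{sq}$ are given by $\begin{bmatrix}i_{s\alpha}\\ i_{s\beta}\end{bmatrix}=\begin{bmatrix}\cos\theta&-\sin\theta\\ \sin\theta&\cos\theta\end{bmatrix}\begin{bmatrix}i_{sd}\\ i_{sq}\end{bmatrix}$. The Lie derivative $\mathcal{L}_fh=\frac{\partial h}{\partial x}f(x,u)$. The observability rank condition at $x_0$ (nonsingularity of the observability matrix at $x_0$) implies local weak observability at $x_0$. *)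

theory Defs
  imports "HOL-Analysis.Analysis"
begin

text \<open>IPMSM model. State x = (i_alpha, i_beta, omega, theta) :: real^4, input v :: real^2.
  Parameters: L0, L2 (inductances), Rs (stator resistance), psi_r (rotor flux).\<close>

definition Ld :: "real \<Rightarrow> real \<Rightarrow> real" where "Ld L0 L2 = L0 + L2"
definition Lq :: "real \<Rightarrow> real \<Rightarrow> real" where "Lq L0 L2 = L0 - L2"

definition Lmat :: "real \<Rightarrow> real \<Rightarrow> real \<Rightarrow> real^2^2" where
  "Lmat L0 L2 th = vector [vector [L0 + L2 * cos (2*th), L2 * sin (2*th)],
                            vector [L2 * sin (2*th), L0 - L2 * cos (2*th)]]"

definition flux :: "real \<Rightarrow> real \<Rightarrow> real \<Rightarrow> real^2 \<Rightarrow> real \<Rightarrow> real^2" where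
  "flux L0 L2 psi i th = Lmat L0 L2 th *v i + psi *\<^sub>R vector [cos th, sin th]"

definition stator_current :: "real^4 \<Rightarrow> real^2" where
  "stator_current x = vector [x$1, x$2]"

text \<open>Vector field f(x,v): from d/dt flux(i,theta) = v - Rs i, i.e.
  L(theta) di/dt + omega * (d flux/d theta) = v - Rs i, together with
  d omega/dt = 0, d theta/dt = omega.\<close>
definition fvec :: "real \<Rightarrow> real \<Rightarrow> real \<Rightarrow> real \<Rightarrow> real^4 \<Rightarrow> real^2 \<Rightarrow> real^4" where
  "fvec L0 L2 Rs psi x v =
    (let i = stator_current x; w = x$3; th = x$4;
         di = matrix_inv (Lmat L0 L2 th) *v
                (v - Rs *\<^sub>R i - w *\<^sub>R vector_derivative (\<lambda>t. flux L0 L2 psi i t) (at th))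
     in vector [di$1, di$2, 0, w])"

definition lie_deriv :: "(real^4 \<Rightarrow> real^2 \<Rightarrow> real^4) \<Rightarrow> real^2 \<Rightarrow> (real^4 \<Rightarrow> real) \<Rightarrow> real^4 \<Rightarrow> real" where
  "lie_deriv f v h x = frechet_derivative h (at x) (f x v)"

definition grad :: "(real^4 \<Rightarrow> real) \<Rightarrow> real^4 \<Rightarrow> real^4" where
  "grad h x = (\<chi> j. frechet_derivative h (at x) (axis j 1))"

definition h_alpha :: "real^4 \<Rightarrow> real" where "h_alpha x = x$1"
definition h_beta :: "real^4 \<Rightarrow> real" where "h_beta x = x$2"

definition obs_matrix :: "real \<Rightarrow> real \<Rightarrow> real \<Rightarrow> real \<Rightarrow> real^2 \<Rightarrow> real^4 \<Rightarrow> real^4^4" where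
  "obs_matrix L0 L2 Rs psi v x =
     vector [grad h_alpha x, grad h_beta x,
             grad (lie_deriv (fvec L0 L2 Rs psi) v h_alpha) x,
             grad (lie_deriv (fvec L0 L2 Rs psi) v h_beta) x]"

definition i_sd :: "real^4 \<Rightarrow> real" where "i_sd x = cos (x$4) * x$1 + sin (x$4) * x$2"
definition i_sq :: "real^4 \<Rightarrow> real" where "i_sq x = - sin (x$4) * x$1 + cos (x$4) * x$2"

definition PsiOd :: "real \<Rightarrow> real \<Rightarrow> real \<Rightarrow> real^4 \<Rightarrow> real" where
  "PsiOd L0 L2 psi x = (Ld L0 L2 - Lq L0 L2) * i_sd x + psi"
definition PsiOq :: "real \<Rightarrow> real \<Rightarrow> real^4 \<Rightarrow> real" where
  "PsiOq L0 L2 x = (Ld L0 L2 - Lq L0 L2) * i_sq x"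

definition dthetaO :: "real \<Rightarrow> real \<Rightarrow> real \<Rightarrow> real \<Rightarrow> real^2 \<Rightarrow> real^4 \<Rightarrow> real" where
  "dthetaO L0 L2 Rs psi v x =
     (let d = PsiOd L0 L2 psi x; q = PsiOq L0 L2 x;
          dd = lie_deriv (fvec L0 L2 Rs psi) v (PsiOd L0 L2 psi) x;
          dq = lie_deriv (fvec L0 L2 Rs psi) v (PsiOq L0 L2) x
      in (d * dq - q * dd) / (d\<^sup>2 + q\<^sup>2))"

end

theory Submission
  imports Defs
begin

lemma det_4b:
  fixes A :: "real^4^4"
  assumes "\<And>j. A$1$j = (if j = 1 then 1 else 0)" "\<And>j. A$2$j = (if j = 2 then 1 else 0)"
  shows "det A = A$3$3 * A$4$4 - A$3$4*A$4$3"
proof -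
  have f1: "finite {2::4, 3, 4}" "1 \<notin> {2::4, 3,4}" by auto
  have f2: "finite {3::4, 4}" "2 \<notin> {3::4, 4}" by auto
  have f3: "finite {4::4}" "3 \<notin> {4::4}" by auto
  have "det A = (\<Sum>p\<in>{p. p permutes {1::4,2,3,4}}. of_int (sign p) * (\<Prod>i\<in>{1::4,2,3,4}. A $ i $ p i))"
    unfolding det_def UNIV_4 ..
  also have "\<dots> = A$3$3 * A$4$4 - A$3$4*A$4$3" 
    unfolding sum_over_permutations_insert[OF f1]
    unfolding sum_over_permutations_insert[OF f2]
    unfolding sum_over_permutations_insert[OF f3]
    unfolding permutes_sing
    by (simp add: assms sign_swap_id permutation_swap_id sign_compose sign_id swap_id_eq)
  finally show ?thesis .
qed

lemma has_derivative_vec_nth'[derivative_intros]: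
  "(g has_derivative g') F \<Longrightarrow> ((\<lambda>x. g x $ i) has_derivative (\<lambda>h. g' h $ i)) F"
  by (rule bounded_linear.has_derivative[OF bounded_linear_vec_nth])

lemma vector_4:
 "(vector [a,b,c,d] ::('a::zero)^4)$1 = a"
 "(vector [a,b,c,d] ::('a::zero)^4)$2 = b"
 "(vector [a,b,c,d] ::('a::zero)^4)$3 = c"
 "(vector [a,b,c,d] ::('a::zero)^4)$4 = d"
  unfolding vector_def by simp_all

lemma matrix_inv_eqI:
  fixes A B :: "real^'n^'n"
  assumes "A ** B = mat 1" "B ** A = mat 1"
  shows "matrix_inv A = B"
proof -
  have ex: "\<exists>A'. A ** A' = mat 1 \<and> A' ** A = mat 1" using assms by blast
  define C where "C = matrix_inv A"
  have C: "A ** C = mat 1 \<and> C ** A = mat 1" unfolding C_def matrix_inv_def by (rule someI_ex[OF ex])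
  have "C = C ** (A ** B)" using assms by simp
  also have "\<dots> = (C ** A) ** B" by (simp add: matrix_mul_assoc)
  also have "\<dots> = B" using C by simp
  finally show ?thesis unfolding C_def .
qed

definition Minv :: "real \<Rightarrow> real \<Rightarrow> real \<Rightarrow> real^2^2" where
  "Minv L0 L2 th = vector [vector [(L0 - L2 * cos (2*th))/(L0^2-L2^2), - L2 * sin (2*th)/(L0^2-L2^2)],
                            vector [- L2 * sin (2*th)/(L0^2-L2^2), (L0 + L2 * cos (2*th))/(L0^2-L2^2)]]"

lemma Lmat_inv:
  assumes "L0^2 - L2^2 \<noteq> 0"
  shows "matrix_inv (Lmat L0 L2 th) = Minv L0 L2 th"
proof (rule matrix_inv_eqI)
  have e: "(sin (th*2))^2 = 1 - (cos (th*2))^2" by (simp add: sin_squared_eq)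
  show "Lmat L0 L2 th ** Minv L0 L2 th = mat 1"
    using assms
    by (simp add: vec_eq_iff forall_2 matrix_matrix_mult_def UNIV_2 Lmat_def Minv_def mat_def
        divide_simps; simp add: algebra_simps power2_eq_square[symmetric] e)
  show "Minv L0 L2 th ** Lmat L0 L2 th = mat 1"
    using assms
    by (simp add: vec_eq_iff forall_2 matrix_matrix_mult_def UNIV_2 Lmat_def Minv_def mat_def
        divide_simps; simp add: algebra_simps power2_eq_square[symmetric] e)
qed


definition dF1 :: "real \<Rightarrow> real \<Rightarrow> real \<Rightarrow> real \<Rightarrow> real \<Rightarrow> real" where
  "dF1 L2 psi i1 i2 t = -2*L2* sin(2*t)*i1 + 2*L2*cos(2*t)*i2 - psi* sin t"
definition dF2 :: "real \<Rightarrow> real \<Rightarrow> real \<Rightarrow> real \<Rightarrow> real \<Rightarrow> real" where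
  "dF2 L2 psi i1 i2 t = 2*L2*cos(2*t)*i1 + 2*L2* sin(2*t)*i2 + psi*cos t"

lemma flux_deriv:
  "vector_derivative (\<lambda>t. flux L0 L2 psi i t) (at th) =
     vector [dF1 L2 psi (i$1) (i$2) th, dF2 L2 psi (i$1) (i$2) th]"
proof (rule vector_derivative_at)
  have eq: "(\<lambda>t. flux L0 L2 psi i t) = (\<lambda>t. ((L0 + L2 * cos (2*t)) * i$1 + L2 * sin (2*t) * i$2 + psi * cos t) *\<^sub>R (axis 1 1 :: real^2)
        + (L2 * sin (2*t) * i$1 + (L0 - L2 * cos (2*t)) * i$2 + psi * sin t) *\<^sub>R (axis 2 1 :: real^2))"
    by (rule ext) (simp add: flux_def Lmat_def vec_eq_iff forall_2 matrix_vector_mult_def UNIV_2 axis_def)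
  show "((\<lambda>t. flux L0 L2 psi i t) has_vector_derivative vector [dF1 L2 psi (i$1) (i$2) th, dF2 L2 psi (i$1) (i$2) th]) (at th)"
    unfolding eq
    apply (rule derivative_eq_intros refl | simp)+
    apply (simp add: vec_eq_iff forall_2 axis_def dF1_def dF2_def algebra_simps)
    done
qed

definition G1 :: "real \<Rightarrow> real \<Rightarrow> real \<Rightarrow> real \<Rightarrow> real^2 \<Rightarrow> real^4 \<Rightarrow> real" where
  "G1 L0 L2 Rs psi v x = ((L0 - L2*cos(2*x$4))*(v$1 - Rs*x$1 - x$3*dF1 L2 psi (x$1) (x$2) (x$4))
       - L2* sin(2*x$4)*(v$2 - Rs*x$2 - x$3*dF2 L2 psi (x$1) (x$2) (x$4))) * inverse (L0^2-L2^2)"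
definition G2 :: "real \<Rightarrow> real \<Rightarrow> real \<Rightarrow> real \<Rightarrow> real^2 \<Rightarrow> real^4 \<Rightarrow> real" where
  "G2 L0 L2 Rs psi v x = (- L2* sin(2*x$4)*(v$1 - Rs*x$1 - x$3*dF1 L2 psi (x$1) (x$2) (x$4))
       + (L0 + L2*cos(2*x$4))*(v$2 - Rs*x$2 - x$3*dF2 L2 psi (x$1) (x$2) (x$4))) * inverse (L0^2-L2^2)"

lemma fvec_eq:
  assumes "L0^2 - L2^2 \<noteq> 0"
  shows "fvec L0 L2 Rs psi x v = vector [G1 L0 L2 Rs psi v x, G2 L0 L2 Rs psi v x, 0, x$3]"
  unfolding fvec_def Let_def Lmat_inv[OF assms] flux_deriv
  by (simp add: stator_current_def G1_def G2_def Minv_def matrix_vector_mult_def UNIV_2 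
       add_divide_distrib diff_divide_distrib algebra_simps divide_inverse)






schematic_goal G1_der: "(G1 L0 L2 Rs psi v has_derivative ?D) (at x)"
  unfolding G1_def[abs_def] dF1_def dF2_def by (rule derivative_intros)+
schematic_goal G2_der: "(G2 L0 L2 Rs psi v has_derivative ?D) (at x)"
  unfolding G2_def[abs_def] dF1_def dF2_def by (rule derivative_intros)+
schematic_goal Pd_der: "(PsiOd L0 L2 psi has_derivative ?D) (at x)"
  unfolding PsiOd_def[abs_def] i_sd_def by (rule derivative_intros)+
schematic_goal Pq_der: "(PsiOq L0 L2 has_derivative ?D) (at x)"
  unfolding PsiOq_def[abs_def] i_sq_def by (rule derivative_intros)+



lemma fd_nth: "frechet_derivative (\<lambda>x::real^4. x $ i) (at y) = (\<lambda>h. h $ i)"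
  by (rule frechet_derivative_at[symmetric]) (rule has_derivative_vec_nth'[OF has_derivative_ident])


lemma core:
  fixes c s i1 i2 w v1 v2 R p L0 L2 :: real
  assumes cs: "c^2 + s^2 = 1"
  and "C2 = c^2 - s^2" "S2 = 2 * s * c" "D = L0^2 - L2^2"
    "F1 = 2 * L2 * C2 * i2 - 2 * L2 * S2 * i1 - p * s" "F2 = 2 * L2 * C2 * i1 + 2 * L2 * S2 * i2 + p * c"
    "F1' = -4 * L2 * S2 * i2 - 4 * L2 * C2 * i1 - p * c" "F2' = -4 * L2 * S2 * i1 + 4 * L2 * C2 * i2 - p * s"
    "r1 = v1 - R * i1 - w * F1" "r2 = v2 - R * i2 - w * F2"
    "N33 = -((L0 - L2 * C2) * F1 - L2 * S2 * F2)" "N43 = -(-L2 * S2 * F1 + (L0+L2 * C2) * F2)"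
    "N34 = 2 * L2 * S2 * r1 - 2 * L2 * C2 * r2 - w * ((L0-L2 * C2) * F1' - L2 * S2 * F2')"
    "N44 = -2 * L2 * C2 * r1 - 2 * L2 * S2 * r2 - w * (-L2 * S2 * F1' + (L0+L2 * C2) * F2')"
    "g1 = (L0-L2 * C2) * r1 - L2 * S2 * r2" "g2 = -L2 * S2 * r1 + (L0+L2 * C2) * r2"
    "d = 2 * L2 * (c * i1 + s * i2) + p" "q = 2 * L2 * (-s * i1 + c * i2)"
    "Ddd = 2 * L2 * (c * g1 - w * s * i1 * D + s * g2 + w * c * i2 * D)"
    "Ddq = 2 * L2 * (-s * g1 - w * c * i1 * D + c * g2 - w * s * i2 * D)"
  shows "N33 * N44 - N34 * N43 = D * (w * (d^2+q^2)) - d * Ddq + q * Ddd"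
  unfolding assms(2-) using cs by algebra

lemma fin:
  fixes K D a b c e W d P q Q :: real
  assumes "K * D = 1" "a * b - c * e = D * W - d * P + q * Q"
  shows "((a * K) * (b * K) - (c * K) * (e * K)) * D = W - d * (P * K) + q * (Q * K)"
proof -
  have "((a * K) * (b * K) - (c * K) * (e * K)) * D = (a * b - c * e) * K * (K * D)" by (simp add: algebra_simps)
  also have "\<dots> = (D * W - d * P + q * Q) * K" using assms by simp
  also have "\<dots> = W * (K * D) - d * (P * K) + q * (Q * K)" by (simp add: algebra_simps)
  finally show ?thesis using assms by simp
qed

lemma key:
  fixes L0 L2 Rs psi :: real and x :: "real^4" and v :: "real^2"
  assumes DD: "L0^2 - L2^2 \<noteq> 0"
  shows "det (obs_matrix L0 L2 Rs psi v x) * (L0^2 - L2^2) =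
     x$3 * ((PsiOd L0 L2 psi x)\<^sup>2 + (PsiOq L0 L2 x)\<^sup>2)
     - PsiOd L0 L2 psi x * lie_deriv (fvec L0 L2 Rs psi) v (PsiOq L0 L2) x
     + PsiOq L0 L2 x * lie_deriv (fvec L0 L2 Rs psi) v (PsiOd L0 L2 psi) x"
proof -
  have la: "lie_deriv (fvec L0 L2 Rs psi) v h_alpha = G1 L0 L2 Rs psi v"
    by (rule ext) (simp add: lie_deriv_def h_alpha_def[abs_def] fd_nth fvec_eq[OF DD] vector_4)
  have lb: "lie_deriv (fvec L0 L2 Rs psi) v h_beta = G2 L0 L2 Rs psi v"
    by (rule ext) (simp add: lie_deriv_def h_beta_def[abs_def] fd_nth fvec_eq[OF DD] vector_4)
  have det: "det (obs_matrix L0 L2 Rs psi v x) =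
     frechet_derivative (G1 L0 L2 Rs psi v) (at x) (axis 3 1) * frechet_derivative (G2 L0 L2 Rs psi v) (at x) (axis 4 1)
     - frechet_derivative (G1 L0 L2 Rs psi v) (at x) (axis 4 1) * frechet_derivative (G2 L0 L2 Rs psi v) (at x) (axis 3 1)"
    unfolding obs_matrix_def la lb by (subst det_4b) (simp_all add: vector_4 grad_def h_alpha_def[abs_def] h_beta_def[abs_def] fd_nth axis_def)
  define c where "c = cos (x$4)"
  define s where "s = sin (x$4)"
  define i1 where "i1 = x$1"
  define i2 where "i2 = x$2"
  define w where "w = x$3"
  define v1 where "v1 = v$1"
  define v2 where "v2 = v$2"
  define K where "K = inverse (L0^2-L2^2)"
  define C2 where "C2 = c^2 - s^2"
  define S2 where "S2 = 2 * s * c"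
  define D where "D = L0^2 - L2^2"
  define F1 where "F1 = 2 * L2 * C2 * i2 - 2 * L2 * S2 * i1 - psi * s"
  define F2 where "F2 = 2 * L2 * C2 * i1 + 2 * L2 * S2 * i2 + psi * c"
  define F1' where "F1' = -4 * L2 * S2 * i2 - 4 * L2 * C2 * i1 - psi * c"
  define F2' where "F2' = -4 * L2 * S2 * i1 + 4 * L2 * C2 * i2 - psi * s"
  define r1 where "r1 = v1 - Rs * i1 - w * F1"
  define r2 where "r2 = v2 - Rs * i2 - w * F2"
  define N33 where "N33 = -((L0 - L2 * C2) * F1 - L2 * S2 * F2)"
  define N43 where "N43 = -(-L2 * S2 * F1 + (L0+L2 * C2) * F2)"
  define N34 where "N34 = 2 * L2 * S2 * r1 - 2 * L2 * C2 * r2 - w * ((L0-L2 * C2) * F1' - L2 * S2 * F2')"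
  define N44 where "N44 = -2 * L2 * C2 * r1 - 2 * L2 * S2 * r2 - w * (-L2 * S2 * F1' + (L0+L2 * C2) * F2')"
  define g1 where "g1 = (L0-L2 * C2) * r1 - L2 * S2 * r2"
  define g2 where "g2 = -L2 * S2 * r1 + (L0+L2 * C2) * r2"
  define d where "d = 2 * L2 * (c * i1 + s * i2) + psi"
  define q where "q = 2 * L2 * (-s * i1 + c * i2)"
  define Ddd where "Ddd = 2 * L2 * (c * g1 - w * s * i1 * D + s * g2 + w * c * i2 * D)"
  define Ddq where "Ddq = 2 * L2 * (-s * g1 - w * c * i1 * D + c * g2 - w * s * i2 * D)"
  have cs: "c^2 + s^2 = 1" unfolding c_def s_def by simp
  have KD: "K * D = 1" unfolding K_def D_def using DD by simp
  have KD': "\<And>y. D * (K * y) = y" using KD by (metis mult.assoc mult.commute mult_1)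
  have core': "N33 * N44 - N34 * N43 = D * (w * (d^2+q^2)) - d * Ddq + q * Ddd"
    by (rule core[OF cs C2_def S2_def D_def F1_def F2_def F1'_def F2'_def r1_def r2_def N33_def N43_def
         N34_def N44_def g1_def g2_def d_def q_def Ddd_def Ddq_def])
  have e33: "frechet_derivative (G1 L0 L2 Rs psi v) (at x) (axis 3 1) = N33 * K"
    unfolding frechet_derivative_at[OF G1_der, symmetric]
    by (simp add: axis_def cos_double sin_double G1_def dF1_def dF2_def N33_def F1_def F2_def
      c_def s_def i1_def i2_def C2_def S2_def K_def algebra_simps)
  have e34: "frechet_derivative (G1 L0 L2 Rs psi v) (at x) (axis 4 1) = N34 * K"
    unfolding frechet_derivative_at[OF G1_der, symmetric]
    by (simp add: axis_def cos_double sin_double G1_def dF1_def dF2_def N34_def F1_def F2_def F1'_def F2'_def r1_def r2_def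
      c_def s_def i1_def i2_def w_def v1_def v2_def C2_def S2_def K_def algebra_simps)
  have e43: "frechet_derivative (G2 L0 L2 Rs psi v) (at x) (axis 3 1) = N43 * K"
    unfolding frechet_derivative_at[OF G2_der, symmetric]
    by (simp add: axis_def cos_double sin_double G1_def dF1_def dF2_def N43_def F1_def F2_def
      c_def s_def i1_def i2_def C2_def S2_def K_def algebra_simps)
  have e44: "frechet_derivative (G2 L0 L2 Rs psi v) (at x) (axis 4 1) = N44 * K"
    unfolding frechet_derivative_at[OF G2_der, symmetric]
    by (simp add: axis_def cos_double sin_double G1_def dF1_def dF2_def N44_def F1_def F2_def F1'_def F2'_def r1_def r2_def
      c_def s_def i1_def i2_def w_def v1_def v2_def C2_def S2_def K_def algebra_simps)
  have G1e: "G1 L0 L2 Rs psi v x = g1 * K"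
    by (simp add: G1_def dF1_def dF2_def g1_def F1_def F2_def r1_def r2_def cos_double sin_double
      c_def s_def i1_def i2_def w_def v1_def v2_def C2_def S2_def K_def algebra_simps)
  have G2e: "G2 L0 L2 Rs psi v x = g2 * K"
    by (simp add: G2_def dF1_def dF2_def g2_def F1_def F2_def r1_def r2_def cos_double sin_double
      c_def s_def i1_def i2_def w_def v1_def v2_def C2_def S2_def K_def algebra_simps)
  have dd: "lie_deriv (fvec L0 L2 Rs psi) v (PsiOd L0 L2 psi) x = Ddd * K"
    unfolding lie_deriv_def fvec_eq[OF DD] frechet_derivative_at[OF Pd_der, symmetric]
    by (simp add: KD' vector_4 G1e G2e Ddd_def Ld_def Lq_def c_def s_def i1_def i2_def w_def algebra_simps)
  have dq: "lie_deriv (fvec L0 L2 Rs psi) v (PsiOq L0 L2) x = Ddq * K"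
    unfolding lie_deriv_def fvec_eq[OF DD] frechet_derivative_at[OF Pq_der, symmetric]
    by (simp add: KD' vector_4 G1e G2e Ddq_def Ld_def Lq_def c_def s_def i1_def i2_def w_def algebra_simps)
  have Pd: "PsiOd L0 L2 psi x = d" by (simp add: PsiOd_def d_def Ld_def Lq_def i_sd_def c_def s_def i1_def i2_def algebra_simps)
  have Pq: "PsiOq L0 L2 x = q" by (simp add: PsiOq_def q_def Ld_def Lq_def i_sq_def c_def s_def i1_def i2_def algebra_simps)
  show ?thesis
    unfolding det e33 e34 e43 e44 dd dq Pd Pq D_def[symmetric] w_def[symmetric]
    by (rule fin[OF KD core'])
qed

lemma helpP: fixes P w N :: real assumes "P \<noteq> 0" shows "P * (w - N / P) = w * P - N"
  using assms by (simp add: field_simps)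

theorem proposition1:
  fixes L0 L2 Rs psi :: real and x :: "real^4" and v :: "real^2"
  assumes "Ld L0 L2 > 0" and "Lq L0 L2 > 0"
  shows "((PsiOd L0 L2 psi x, PsiOq L0 L2 x) \<noteq> (0, 0) \<longrightarrow>
           det (obs_matrix L0 L2 Rs psi v x) =
             ((PsiOd L0 L2 psi x)\<^sup>2 + (PsiOq L0 L2 x)\<^sup>2) / (Ld L0 L2 * Lq L0 L2)
             * (x$3 - dthetaO L0 L2 Rs psi v x))
       \<and> ((PsiOd L0 L2 psi x, PsiOq L0 L2 x) = (0, 0) \<longrightarrow>
           det (obs_matrix L0 L2 Rs psi v x) = 0)
       \<and> (det (obs_matrix L0 L2 Rs psi v x) \<noteq> 0 \<longleftrightarrow>
           (PsiOd L0 L2 psi x, PsiOq L0 L2 x) \<noteq> (0, 0) \<and> dthetaO L0 L2 Rs psi v x \<noteq> x$3)"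
proof -
  define L where "L = Ld L0 L2 * Lq L0 L2"
  have L: "L > 0" unfolding L_def using assms by simp
  have LL: "L0^2 - L2^2 = L" unfolding L_def Ld_def Lq_def by (simp add: algebra_simps power2_eq_square)
  define d where "d = PsiOd L0 L2 psi x"
  define q where "q = PsiOq L0 L2 x"
  define dd where "dd = lie_deriv (fvec L0 L2 Rs psi) v (PsiOd L0 L2 psi) x"
  define dq where "dq = lie_deriv (fvec L0 L2 Rs psi) v (PsiOq L0 L2) x"
  define De where "De = det (obs_matrix L0 L2 Rs psi v x)"
  have k: "De * L = x$3 * (d^2 + q^2) - d * dq + q * dd"
    using key[of L0 L2 Rs psi v x] L unfolding LL De_def d_def q_def dd_def dq_def by simp
  have th: "dthetaO L0 L2 Rs psi v x = (d * dq - q * dd) / (d^2 + q^2)"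
    unfolding dthetaO_def Let_def d_def q_def dd_def dq_def ..
  have P1: "(d, q) \<noteq> (0,0) \<Longrightarrow> De = (d^2 + q^2) / L * (x$3 - dthetaO L0 L2 Rs psi v x)"
  proof -
    assume "(d, q) \<noteq> (0,0)"
    then have P: "d^2 + q^2 > 0" by (auto simp: sum_power2_gt_zero_iff)
    have "De = (x$3 * (d^2 + q^2) - d * dq + q * dd) / L" using k L by (simp add: field_simps)
    also have "\<dots> = (d^2 + q^2) / L * (x$3 - dthetaO L0 L2 Rs psi v x)"
    proof -
      have P0: "d^2 + q^2 \<noteq> 0" using P by linarith
      have e: "(d^2 + q^2) * (x$3 - (d * dq - q * dd) / (d^2 + q^2)) = x$3 * (d^2 + q^2) - (d * dq - q * dd)"
        using helpP[OF P0] .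
      show ?thesis unfolding th times_divide_eq_left e by (simp add: algebra_simps)
    qed
    finally show ?thesis .
  qed
  have P2: "(d, q) = (0,0) \<Longrightarrow> De = 0" using k L by simp
  have P3: "De \<noteq> 0 \<longleftrightarrow> (d, q) \<noteq> (0,0) \<and> dthetaO L0 L2 Rs psi v x \<noteq> x$3"
  proof (cases "(d, q) = (0,0)")
    case True then show ?thesis using P2 by simp
  next
    case False
    then have P: "d^2 + q^2 > 0" by (auto simp: sum_power2_gt_zero_iff)
    show ?thesis using P1[OF False] P L False by auto
  qed
  show ?thesis using P1 P2 P3 unfolding De_def d_def q_def L_def by blast
qed
end
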